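(* Let $n_1,n_2,n_3$ be integers with $3\le n_1,n_2\le n_3$ and $3\max(n_1,n_2)\le 2n_3\le n_1n_2$. Every set $W$ produced by the Middle Cone Construction described below is a basic landmark system for $K(\mathbf{n})$.
   Context: $K(\mathbf{n})=K_{n_1}\times K_{n_2}\times K_{n_3}$: vertices are triples $(x_1,x_2,x_3)$, $1\le x_i\le n_i$, adjacent iff they differ in every coordinate. For a vertex set $W$, $W_{i,a}=\{w\in W:w_i=a\}$. Basic landmark system: $W$ such that (1) $W_{i,a}\neq\emptyset$ for all $i\in\{1,2,3\}$, $1\le a\le n_i$; (2) $|W_{i,a}|\ge2$ for all such $i,a$; (3) $|W_{i,a}\cap W_{j,b}|\le1$ whenever $i\ne j$. Multiplicities: write $n_3=qn_1+r$, $0\le r\le n_1-1$. If $r\le n_1-r$, $(\ell_1,\dots,\ell_{n_1})$ is $(q+1,q)$ repeated $r$ times followed by $n_1-2r$ copies of $q$; if $r>n_1-r$, it is $(q+1,q)$ repeated $n_1-r$ times followed by $2r-n_1$ copies of $q+1$. Let $L_i=\sum_{j<i}\ell_j$, so block $i$ consists of columns $c$ with $L_i<c\le L_i+\ell_i$; $s_i=L_i+1$. Middle Cone Construction: $W=W^L\cup W^R$, each consisting of $n_3$ landmarks indexed by columns $c=1,\dots,n_3$. Left column $c$ in block $i$ is $(i,y^L_c,c)$; right column $c$ in block $i$ is $(i+1,y^R_c,c)$ with $n_1+1$ read as $1$. Even $n_2$, $h=n_2/2$: $y^L_c=((c-1)\bmod h)+1$, $y^R_c=h+((c-1)\bmod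 h)+1$. Odd $n_2$, $f=(n_2-1)/2$, $k=\#\{i:\ell_i>f\}$: let $S=\{s_i:\ell_i>f\}$ if $k\ge2$ and $S=\{1\}$ if $k\le1$. Set $y^L_c=n_2$ for $c\in S$ and fill the other left columns in increasing order with $1,\dots,f,1,\dots,f,\dots$; set $y^R_c=n_2$ for $c\in S+1$ and fill the other right columns in increasing order with $f+1,\dots,2f,f+1,\dots,2f,\dots$. If $k\le1$, additionally change one left landmark of the form $(x,1,z)$ with $x\notin\{1,2,n_1\}$ to $(x,n_2,z)$ (any such choice). *)

theory Defs
  imports Main
begin

text \<open>Vertices of K(n1,n2,n3) are triples of naturals (x1,x2,x3) with 1 \<le> xi \<le> ni.\<close>
type_synonym vert = "nat \<times> nat \<times> nat"

definition coord :: "nat \<Rightarrow> vert \<Rightarrow> nat" where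
  "coord i v = (case v of (x1, x2, x3) \<Rightarrow> if i = 1 then x1 else if i = 2 then x2 else x3)"

definition dimn :: "nat \<Rightarrow> nat \<Rightarrow> nat \<Rightarrow> nat \<Rightarrow> nat" where
  "dimn n1 n2 n3 i = (if i = 1 then n1 else if i = 2 then n2 else n3)"

definition vertices :: "nat \<Rightarrow> nat \<Rightarrow> nat \<Rightarrow> vert set" where
  "vertices n1 n2 n3 = {1..n1} \<times> {1..n2} \<times> {1..n3}"

definition slice :: "vert set \<Rightarrow> nat \<Rightarrow> nat \<Rightarrow> vert set" where
  "slice W i a = {w \<in> W. coord i w = a}"

definition basic_landmark_system :: "nat \<Rightarrow> nat \<Rightarrow> nat \<Rightarrow> vert set \<Rightarrow> bool" where
  "basic_landmark_system n1 n2 n3 W \<longleftrightarrow>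
     W \<subseteq> vertices n1 n2 n3 \<and>
     (\<forall>i\<in>{1,2,3}. \<forall>a\<in>{1..dimn n1 n2 n3 i}. slice W i a \<noteq> {}) \<and>
     (\<forall>i\<in>{1,2,3}. \<forall>a\<in>{1..dimn n1 n2 n3 i}. card (slice W i a) \<ge> 2) \<and>
     (\<forall>i\<in>{1,2,3}. \<forall>j\<in>{1,2,3}. \<forall>a\<in>{1..dimn n1 n2 n3 i}. \<forall>b\<in>{1..dimn n1 n2 n3 j}.
        i \<noteq> j \<longrightarrow> card (slice W i a \<inter> slice W j b) \<le> 1)"

definition ell :: "nat \<Rightarrow> nat \<Rightarrow> nat \<Rightarrow> nat" where
  "ell n1 n3 i = (let q = n3 div n1; r = n3 mod n1 in
     if r \<le> n1 - r then (if odd i \<and> i \<le> 2 * r then q + 1 else q)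
     else (if i \<le> 2 * (n1 - r) then (if odd i then q + 1 else q) else q + 1))"

definition Lsum :: "nat \<Rightarrow> nat \<Rightarrow> nat \<Rightarrow> nat" where
  "Lsum n1 n3 i = (\<Sum>j\<in>{1..<i}. ell n1 n3 j)"

definition sblk :: "nat \<Rightarrow> nat \<Rightarrow> nat \<Rightarrow> nat" where
  "sblk n1 n3 i = Lsum n1 n3 i + 1"

definition blk :: "nat \<Rightarrow> nat \<Rightarrow> nat \<Rightarrow> nat" where
  "blk n1 n3 c = (THE i. i \<in> {1..n1} \<and> Lsum n1 n3 i < c \<and> c \<le> Lsum n1 n3 i + ell n1 n3 i)"

definition WLeft :: "nat \<Rightarrow> nat \<Rightarrow> (nat \<Rightarrow> nat) \<Rightarrow> vert set" where
  "WLeft n1 n3 y = {(blk n1 n3 c, y c, c) | c. c \<in> {1..n3}}"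

definition WRight :: "nat \<Rightarrow> nat \<Rightarrow> (nat \<Rightarrow> nat) \<Rightarrow> vert set" where
  "WRight n1 n3 y = {(blk n1 n3 c mod n1 + 1, y c, c) | c. c \<in> {1..n3}}"

definition yL_even :: "nat \<Rightarrow> nat \<Rightarrow> nat" where
  "yL_even n2 c = ((c - 1) mod (n2 div 2)) + 1"

definition yR_even :: "nat \<Rightarrow> nat \<Rightarrow> nat" where
  "yR_even n2 c = n2 div 2 + ((c - 1) mod (n2 div 2)) + 1"

definition fpar :: "nat \<Rightarrow> nat" where
  "fpar n2 = (n2 - 1) div 2"

definition bigblocks :: "nat \<Rightarrow> nat \<Rightarrow> nat \<Rightarrow> nat set" where
  "bigblocks n1 n2 n3 = {i \<in> {1..n1}. ell n1 n3 i > fpar n2}"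

definition kpar :: "nat \<Rightarrow> nat \<Rightarrow> nat \<Rightarrow> nat" where
  "kpar n1 n2 n3 = card (bigblocks n1 n2 n3)"

definition Sset :: "nat \<Rightarrow> nat \<Rightarrow> nat \<Rightarrow> nat set" where
  "Sset n1 n2 n3 = (if kpar n1 n2 n3 \<ge> 2 then sblk n1 n3 ` bigblocks n1 n2 n3 else {1})"

text \<open>Position (1-based) of column c among the columns 1..c not in S
  (the "increasing order" filling).\<close>
definition rank_out :: "nat set \<Rightarrow> nat \<Rightarrow> nat" where
  "rank_out S c = card {c'. 1 \<le> c' \<and> c' \<le> c \<and> c' \<notin> S}"

definition yL_odd :: "nat \<Rightarrow> nat \<Rightarrow> nat \<Rightarrow> nat \<Rightarrow> nat" where
  "yL_odd n1 n2 n3 c = (if c \<in> Sset n1 n2 n3 then n2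
     else ((rank_out (Sset n1 n2 n3) c - 1) mod fpar n2) + 1)"

definition yR_odd :: "nat \<Rightarrow> nat \<Rightarrow> nat \<Rightarrow> nat \<Rightarrow> nat" where
  "yR_odd n1 n2 n3 c = (let S1 = (\<lambda>s. s + 1) ` Sset n1 n2 n3 in
     if c \<in> S1 then n2 else fpar n2 + ((rank_out S1 c - 1) mod fpar n2) + 1)"

text \<open>W is a set produced by the Middle Cone Construction (including every admissible
  choice of the modified landmark in the case k \<le> 1).\<close>
definition middle_cone :: "nat \<Rightarrow> nat \<Rightarrow> nat \<Rightarrow> vert set \<Rightarrow> bool" where
  "middle_cone n1 n2 n3 W \<longleftrightarrow>
     (if even n2 then W = WLeft n1 n3 (yL_even n2) \<union> WRight n1 n3 (yR_even n2)
      else if kpar n1 n2 n3 \<ge> 2 then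
        W = WLeft n1 n3 (yL_odd n1 n2 n3) \<union> WRight n1 n3 (yR_odd n1 n2 n3)
      else (\<exists>c\<in>{1..n3}. yL_odd n1 n2 n3 c = 1 \<and> blk n1 n3 c \<notin> {1, 2, n1} \<and>
              W = WLeft n1 n3 ((yL_odd n1 n2 n3)(c := n2)) \<union> WRight n1 n3 (yR_odd n1 n2 n3)))"

end

theory Submission
  imports Defs
begin

lemma auxA: "(min i (2*r) + 1) div 2 + (if odd (Suc i) \<and> Suc i \<le> 2*r then 1 else 0) = (min (Suc i) (2*r) + 1) div (2::nat)"
proof (cases "Suc i \<le> 2*r")
  case True
  then show ?thesis by (cases "even i") (auto simp: min_def)
next
  case False
  then show ?thesis by (cases "i = 2*r"; simp add: min_def)
qed

locale mc =
  fixes n1 n2 n3 :: nat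
  assumes n1ge: "3 \<le> n1" and n2ge: "3 \<le> n2" and n13: "n1 \<le> n3" and n23: "n2 \<le> n3"
    and lo: "3 * max n1 n2 \<le> 2 * n3" and hi: "2 * n3 \<le> n1 * n2"
begin

abbreviation "q \<equiv> n3 div n1"
abbreviation "r \<equiv> n3 mod n1"
abbreviation "l \<equiv> ell n1 n3"
abbreviation "L \<equiv> Lsum n1 n3"
abbreviation "B \<equiv> blk n1 n3"

lemma n3eq: "n3 = n1 * q + r" by simp

lemma r_lt: "r < n1" using n1ge by simp

lemma L1: "L 1 = 0" by (simp add: Lsum_def)
lemma L0: "L (Suc 0) = 0" by (simp add: Lsum_def)
lemma rr: "r \<le> n1 - r \<longleftrightarrow> 2 * r \<le> n1" using r_lt by arith

lemma LSuc: "i \<ge> 1 \<Longrightarrow> L (Suc i) = L i + l i"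
  unfolding Lsum_def by (simp add: atLeastLessThanSuc add.commute)

lemma ell_A: "2 * r \<le> n1 \<Longrightarrow> l i = (if odd i \<and> i \<le> 2 * r then q + 1 else q)"
  using rr by (simp add: ell_def Let_def)

lemma ell_B: "\<not> 2 * r \<le> n1 \<Longrightarrow> l i = (if i \<le> 2 * (n1 - r) then (if odd i then q + 1 else q) else q + 1)"
  using rr by (simp add: ell_def Let_def)

lemma LformA: "2 * r \<le> n1 \<Longrightarrow> L (Suc i) = i * q + (min i (2*r) + 1) div 2"
proof (induction i)
  case 0 then show ?case by (simp add: L0)
next
  case (Suc i)
  have "L (Suc (Suc i)) = L (Suc i) + l (Suc i)" by (rule LSuc) simp
  also have "\<dots> = i * q + (min i (2*r) + 1) div 2 + (if odd (Suc i) \<and> Suc i \<le> 2 * r then q + 1 else q)"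
    using Suc ell_A by simp
  also have "\<dots> = Suc i * q + ((min i (2*r) + 1) div 2 + (if odd (Suc i) \<and> Suc i \<le> 2*r then 1 else 0))"
    by simp
  also have "\<dots> = Suc i * q + (min (Suc i) (2*r) + 1) div 2" by (simp only: auxA)
  finally show ?case .
qed

lemma LformB: "\<not> 2 * r \<le> n1 \<Longrightarrow> L (Suc i) = i * q + (min i (2*(n1-r)) + 1) div 2 + (i - min i (2*(n1-r)))"
proof (induction i)
  case 0 then show ?case by (simp add: L0)
next
  case (Suc i)
  have "L (Suc (Suc i)) = L (Suc i) + l (Suc i)" by (rule LSuc) simp
  also have "\<dots> = i * q + (min i (2*(n1-r)) + 1) div 2 + (i - min i (2*(n1-r))) + (if Suc i \<le> 2 * (n1 - r) then (if odd (Suc i) then q + 1 else q) else q + 1)"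
    using Suc ell_B by simp
  also have "\<dots> = Suc i * q + (min (Suc i) (2*(n1-r)) + 1) div 2 + (Suc i - min (Suc i) (2*(n1-r)))"
    by (simp split: if_splits; presburger)
  finally show ?case .
qed

lemma Lend: "L (Suc n1) = n3"
proof (cases "2 * r \<le> n1")
  case True
  have "min n1 (2*r) = 2*r" using True by simp
  then have "L (Suc n1) = n1 * q + (2*r + 1) div 2" using LformA[OF True, of n1] by simp
  also have "\<dots> = n3" by simp
  finally show ?thesis .
next
  case False
  have m: "min n1 (2*(n1-r)) = 2*(n1-r)" using False r_lt by simp
  have d: "(2*(n1-r) + 1) div 2 = n1 - r" by simp
  have e: "(n1-r) + (n1 - 2*(n1-r)) = r" using False r_lt by arith
  have "L (Suc n1) = n1 * q + (2*(n1-r) + 1) div 2 + (n1 - 2*(n1-r))" using LformB[OF False, of n1] m by simp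
  also have "\<dots> = n1 * q + r" unfolding d by (simp only: add.assoc e)
  also have "\<dots> = n3" by simp
  finally show ?thesis .
qed


lemma q_ge1: "1 \<le> q" using div_le_mono[OF n13, of n1] n1ge by simp

lemma ell_cases: "l i = q \<or> l i = q + 1"
  by (cases "2 * r \<le> n1") (auto simp: ell_A ell_B)

lemma ell_r0: "r = 0 \<Longrightarrow> l i = q"
  using n1ge by (cases "i = 0") (simp_all add: ell_A)

lemma ell_ge1: "1 \<le> l i" using ell_cases[of i] q_ge1 by auto

lemma ell_1: "2 \<le> l 1"
proof -
  have "2 \<le> q \<or> 1 \<le> r"
  proof (rule ccontr)
    assume "\<not> ?thesis"
    then have "q = 1" "r = 0" using q_ge1 by auto
    then have "n3 = n1" using n3eq by simp
    then show False using lo n1ge by simp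
  qed
  then show ?thesis
  proof
    assume "2 \<le> q" then show ?thesis using ell_cases[of 1] by auto
  next
    assume r1: "1 \<le> r"
    show ?thesis
    proof (cases "2 * r \<le> n1")
      case True then show ?thesis using r1 q_ge1 by (simp add: ell_A)
    next
      case False then show ?thesis using r1 r_lt q_ge1 by (simp add: ell_B)
    qed
  qed
qed

lemma L_lt: "1 \<le> i \<Longrightarrow> i < j \<Longrightarrow> L i + l i \<le> L j"
proof (induction j)
  case 0 then show ?case by simp
next
  case (Suc j)
  show ?case
  proof (cases "i = j")
    case True then show ?thesis using Suc LSuc by simp
  next
    case False
    then have "L i + l i \<le> L j" using Suc by simp
    moreover have "L (Suc j) = L j + l j" using Suc False by (intro LSuc) simp
    ultimately show ?thesis by simp
  qed
qed

lemma blk_eq: "1 \<le> i \<Longrightarrow> i \<le> n1 \<Longrightarrow> L i < c \<Longrightarrow> c \<le> L i + l i \<Longrightarrow> B c = i"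
  unfolding blk_def
proof (rule the_equality)
  assume "1 \<le> i" "i \<le> n1" "L i < c" "c \<le> L i + l i"
  then show "i \<in> {1..n1} \<and> L i < c \<and> c \<le> L i + l i" by simp
  fix j assume j: "j \<in> {1..n1} \<and> L j < c \<and> c \<le> L j + l j"
  show "j = i"
  proof (rule ccontr)
    assume "j \<noteq> i"
    then consider "j < i" | "i < j" by linarith
    then show False
    proof cases
      case 1 then have "L j + l j \<le> L i" using j by (intro L_lt) auto
      then show False using j \<open>L i < c\<close> by simp
    next
      case 2 then have "L i + l i \<le> L j" using \<open>1 \<le> i\<close> by (intro L_lt) auto
      then show False using j \<open>c \<le> L i + l i\<close> by simp
    qed
  qed
qed

lemma blk_ex_aux: "0 < c \<Longrightarrow> c \<le> L (Suc n) \<Longrightarrow> \<exists>i\<in>{1..n}. L i < c \<and> c \<le> L i + l i"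
proof (induction n)
  case 0 then show ?case by (simp add: L0)
next
  case (Suc n)
  show ?case
  proof (cases "c \<le> L (Suc n)")
    case True then show ?thesis using Suc by force
  next
    case False
    moreover have "L (Suc (Suc n)) = L (Suc n) + l (Suc n)" by (rule LSuc) simp
    ultimately show ?thesis using Suc.prems by (intro bexI[of _ "Suc n"]) auto
  qed
qed

lemma blk_prop: "1 \<le> c \<Longrightarrow> c \<le> n3 \<Longrightarrow> 1 \<le> B c \<and> B c \<le> n1 \<and> L (B c) < c \<and> c \<le> L (B c) + l (B c)"
proof -
  assume c: "1 \<le> c" "c \<le> n3"
  then obtain i where i: "i \<in> {1..n1}" "L i < c" "c \<le> L i + l i"
    using blk_ex_aux[of c n1] Lend by auto
  then have "B c = i" using blk_eq by simp
  then show ?thesis using i by simp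
qed

lemma blk_range: "c \<in> {1..n3} \<Longrightarrow> B c \<in> {1..n1}" using blk_prop by simp

lemma Lend_le: "1 \<le> i \<Longrightarrow> i \<le> n1 \<Longrightarrow> L i + l i \<le> n3"
  using L_lt[of i "Suc n1"] Lend by simp

lemma sblk_prop: "1 \<le> i \<Longrightarrow> i \<le> n1 \<Longrightarrow> B (L i + 1) = i \<and> L i + 1 \<le> n3"
  using blk_eq[of i "L i + 1"] ell_ge1[of i] Lend_le[of i] by simp

lemma sblk2_prop: "1 \<le> i \<Longrightarrow> i \<le> n1 \<Longrightarrow> 2 \<le> l i \<Longrightarrow> B (L i + 2) = i \<and> L i + 2 \<le> n3"
  using blk_eq[of i "L i + 2"] Lend_le[of i] by simp

definition sig :: "nat \<Rightarrow> nat" where "sig x = x mod n1 + 1"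

lemma sig_val: "x \<in> {1..n1} \<Longrightarrow> sig x = (if x = n1 then 1 else x + 1)"
proof -
  assume x: "x \<in> {1..n1}"
  show ?thesis
  proof (cases "x = n1")
    case True then show ?thesis by (simp add: sig_def)
  next
    case False then have "x < n1" using x by simp
    then show ?thesis using False by (simp add: sig_def)
  qed
qed

lemma sig_range: "x \<in> {1..n1} \<Longrightarrow> sig x \<in> {1..n1}"
  using n1ge sig_val[of x] by auto

lemma sig_neq: "x \<in> {1..n1} \<Longrightarrow> sig x \<noteq> x"
  using n1ge sig_val[of x] by auto

lemma sig_inj: "x \<in> {1..n1} \<Longrightarrow> y \<in> {1..n1} \<Longrightarrow> sig x = sig y \<Longrightarrow> x = y"
  using sig_val[of x] sig_val[of y] by (cases "x = n1"; cases "y = n1") auto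

lemma sig_surj: "x \<in> {1..n1} \<Longrightarrow> \<exists>p\<in>{1..n1}. sig p = x"
proof -
  assume x: "x \<in> {1..n1}"
  show ?thesis
  proof (cases "x = 1")
    case True then show ?thesis using n1ge sig_val[of n1] by (intro bexI[of _ n1]) auto
  next
    case False then have "x - 1 \<in> {1..n1}" "x - 1 \<noteq> n1" using x by auto
    then show ?thesis using False x sig_val[of "x - 1"] by (intro bexI[of _ "x - 1"]) auto
  qed
qed
end

lemma coord_simps[simp]: "coord (Suc 0) (a, b, c) = a" "coord 1 (a, b, c) = a" "coord 2 (a, b, c) = b" "coord 3 (a, b, c) = c"
  by (simp_all add: coord_def)

lemma dimn_simps[simp]: "dimn n1 n2 n3 (Suc 0) = n1" "dimn n1 n2 n3 1 = n1" "dimn n1 n2 n3 2 = n2" "dimn n1 n2 n3 3 = n3"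
  by (simp_all add: dimn_def)

lemma two_card: "finite A \<Longrightarrow> a \<in> A \<Longrightarrow> b \<in> A \<Longrightarrow> a \<noteq> b \<Longrightarrow> 2 \<le> card A"
proof -
  assume "finite A" "a \<in> A" "b \<in> A" "a \<noteq> b"
  then have "card {a, b} \<le> card A" by (intro card_mono) auto
  then show ?thesis using \<open>a \<noteq> b\<close> by simp
qed

context mc begin

lemma WLeft_eq: "WLeft n1 n3 y = (\<lambda>c. (B c, y c, c)) ` {1..n3}" by (auto simp: WLeft_def)
lemma WRight_eq: "WRight n1 n3 y = (\<lambda>c. (sig (B c), y c, c)) ` {1..n3}" by (auto simp: WRight_def sig_def)

lemma generic:
  assumes G1: "\<forall>c\<in>{1..n3}. yL c \<in> {1..n2} \<and> yR c \<in> {1..n2}"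
    and G2: "\<forall>c\<in>{1..n3}. yL c \<noteq> yR c"
    and G3: "\<forall>c\<in>{1..n3}. \<forall>c'\<in>{1..n3}. B c = B c' \<longrightarrow> yL c = yL c' \<longrightarrow> c = c'"
    and G4: "\<forall>c\<in>{1..n3}. \<forall>c'\<in>{1..n3}. B c = B c' \<longrightarrow> yR c = yR c' \<longrightarrow> c = c'"
    and G5: "\<forall>c\<in>{1..n3}. \<forall>c'\<in>{1..n3}. B c = sig (B c') \<longrightarrow> yL c \<noteq> yR c'"
    and G6: "\<forall>a\<in>{1..n2}. \<exists>c\<in>{1..n3}. \<exists>c'\<in>{1..n3}. c \<noteq> c' \<and> (yL c = a \<or> yR c = a) \<and> (yL c' = a \<or> yR c' = a)"
  shows "basic_landmark_system n1 n2 n3 (WLeft n1 n3 yL \<union> WRight n1 n3 yR)"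
proof -
  define lm where "lm c = (B c, yL c, c)" for c
  define rm where "rm c = (sig (B c), yR c, c)" for c
  define W where "W = WLeft n1 n3 yL \<union> WRight n1 n3 yR"
  have Weq: "W = lm ` {1..n3} \<union> rm ` {1..n3}"
    unfolding W_def WLeft_eq WRight_eq lm_def rm_def by simp
  have finW: "finite W" unfolding Weq by simp
  have lmW: "c \<in> {1..n3} \<Longrightarrow> lm c \<in> W" for c unfolding Weq by simp
  have rmW: "c \<in> {1..n3} \<Longrightarrow> rm c \<in> W" for c unfolding Weq by simp
  have Wcases: "w \<in> W \<Longrightarrow> (\<exists>c\<in>{1..n3}. w = lm c \<or> w = rm c)" for w unfolding Weq by auto
  have Bc: "c \<in> {1..n3} \<Longrightarrow> B c \<in> {1..n1}" for c using blk_range by simp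
  have sub: "W \<subseteq> vertices n1 n2 n3"
  proof
    fix w assume "w \<in> W"
    then obtain c where c: "c \<in> {1..n3}" "w = lm c \<or> w = rm c" using Wcases by blast
    then show "w \<in> vertices n1 n2 n3" using Bc[OF c(1)] sig_range[OF Bc[OF c(1)]] G1 c
      unfolding vertices_def lm_def rm_def by auto
  qed
  have P12: "w \<in> W \<Longrightarrow> w' \<in> W \<Longrightarrow> coord 1 w = coord 1 w' \<Longrightarrow> coord 2 w = coord 2 w' \<Longrightarrow> w = w'" for w w'
  proof -
    assume w: "w \<in> W" and w': "w' \<in> W" and e1: "coord 1 w = coord 1 w'" and e2: "coord 2 w = coord 2 w'"
    obtain c where c: "c \<in> {1..n3}" "w = lm c \<or> w = rm c" using Wcases w by blast
    obtain c' where c': "c' \<in> {1..n3}" "w' = lm c' \<or> w' = rm c'" using Wcases w' by blast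
    show "w = w'"
      using c c' e1 e2 G3[rule_format, OF c(1) c'(1)] G4[rule_format, OF c(1) c'(1)]
        G5[rule_format, OF c(1) c'(1)] G5[rule_format, OF c'(1) c(1)] sig_inj[OF Bc[OF c(1)] Bc[OF c'(1)]]
      unfolding lm_def rm_def by (auto simp: coord_def)
  qed
  have P13: "w \<in> W \<Longrightarrow> w' \<in> W \<Longrightarrow> coord 1 w = coord 1 w' \<Longrightarrow> coord 3 w = coord 3 w' \<Longrightarrow> w = w'" for w w'
  proof -
    assume w: "w \<in> W" and w': "w' \<in> W" and e1: "coord 1 w = coord 1 w'" and e2: "coord 3 w = coord 3 w'"
    obtain c where c: "c \<in> {1..n3}" "w = lm c \<or> w = rm c" using Wcases w by blast
    obtain c' where c': "c' \<in> {1..n3}" "w' = lm c' \<or> w' = rm c'" using Wcases w' by blast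
    show "w = w'"
      using c c' e1 e2 sig_neq[OF Bc[OF c(1)]]
      unfolding lm_def rm_def by (auto simp: coord_def)
  qed
  have P23: "w \<in> W \<Longrightarrow> w' \<in> W \<Longrightarrow> coord 2 w = coord 2 w' \<Longrightarrow> coord 3 w = coord 3 w' \<Longrightarrow> w = w'" for w w'
  proof -
    assume w: "w \<in> W" and w': "w' \<in> W" and e1: "coord 2 w = coord 2 w'" and e2: "coord 3 w = coord 3 w'"
    obtain c where c: "c \<in> {1..n3}" "w = lm c \<or> w = rm c" using Wcases w by blast
    obtain c' where c': "c' \<in> {1..n3}" "w' = lm c' \<or> w' = rm c'" using Wcases w' by blast
    show "w = w'"
      using c c' e1 e2 G2[rule_format, OF c(1)] G2[rule_format, OF c'(1)]
      unfolding lm_def rm_def by (auto simp: coord_def)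
  qed
  have card2: "2 \<le> card (slice W i a)" if i: "i \<in> {1,2,3}" and a: "a \<in> {1..dimn n1 n2 n3 i}" for i a
  proof -
    have fs: "finite (slice W i a)" using finW by (simp add: slice_def)
    consider "i = 1" | "i = 2" | "i = 3" using i by auto
    then show ?thesis
    proof cases
      case 1
      then have x: "a \<in> {1..n1}" using a by simp
      obtain p where p: "p \<in> {1..n1}" "sig p = a" using sig_surj[OF x] by blast
      have s1: "B (L a + 1) = a" "L a + 1 \<le> n3" using sblk_prop x by auto
      have s2: "B (L p + 1) = p" "L p + 1 \<le> n3" using sblk_prop p by auto
      have "lm (L a + 1) \<in> W" "rm (L p + 1) \<in> W" using s1 s2 lmW rmW by auto
      then have "lm (L a + 1) \<in> slice W i a" "rm (L p + 1) \<in> slice W i a"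
        using 1 s1 s2 p by (simp_all add: slice_def lm_def rm_def)
      moreover have "lm (L a + 1) \<noteq> rm (L p + 1)"
      proof
        assume "lm (L a + 1) = rm (L p + 1)"
        then have "L a + 1 = L p + 1" by (simp add: lm_def rm_def)
        then have "B (L a + 1) = B (L p + 1)" by simp
        then have "a = p" using s1(1) s2(1) by simp
        then show False using sig_neq p by simp
      qed
      ultimately show ?thesis by (intro two_card[OF fs])
    next
      case 2
      then have x: "a \<in> {1..n2}" using a by simp
      obtain c c' where cc: "c \<in> {1..n3}" "c' \<in> {1..n3}" "c \<noteq> c'"
        "yL c = a \<or> yR c = a" "yL c' = a \<or> yR c' = a" using G6 x by blast
      have hit: "\<exists>w\<in>slice W i a. snd (snd w) = d" if d: "d \<in> {1..n3}" "yL d = a \<or> yR d = a" for d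
      proof (cases "yL d = a")
        case True
        have "lm d \<in> slice W i a" using lmW[OF d(1)] True 2 by (simp add: slice_def lm_def)
        then show ?thesis by (intro bexI[of _ "lm d"]) (simp_all add: lm_def)
      next
        case False
        then have "yR d = a" using d by simp
        then have "rm d \<in> slice W i a" using rmW[OF d(1)] 2 by (simp add: slice_def rm_def)
        then show ?thesis by (intro bexI[of _ "rm d"]) (simp_all add: rm_def)
      qed
      obtain w where w: "w \<in> slice W i a" "snd (snd w) = c" using hit[of c] cc by blast
      obtain w' where w': "w' \<in> slice W i a" "snd (snd w') = c'" using hit[of c'] cc by blast
      have "w \<noteq> w'" using w w' cc by auto
      then show ?thesis using w w' by (intro two_card[OF fs])
    next
      case 3
      then have x: "a \<in> {1..n3}" using a by simp
      have "lm a \<in> slice W i a" "rm a \<in> slice W i a" using 3 x lmW rmW by (auto simp: slice_def lm_def rm_def)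
      moreover have "lm a \<noteq> rm a" using sig_neq[OF Bc[OF x]] by (simp add: lm_def rm_def)
      ultimately show ?thesis by (intro two_card[OF fs])
    qed
  qed
  have inter: "card (slice W i a \<inter> slice W j b) \<le> 1" if ij: "i \<in> {1,2,3}" "j \<in> {1,2,3}" "i \<noteq> j" for i j a b
  proof -
    have fs: "finite (slice W i a \<inter> slice W j b)" using finW by (simp add: slice_def)
    have "\<forall>u\<in>slice W i a \<inter> slice W j b. \<forall>v\<in>slice W i a \<inter> slice W j b. u = v"
    proof (intro ballI)
      fix u v assume u: "u \<in> slice W i a \<inter> slice W j b" and v: "v \<in> slice W i a \<inter> slice W j b"
      then have uv: "u \<in> W" "v \<in> W" "coord i u = coord i v" "coord j u = coord j v" by (auto simp: slice_def)
      consider "i = 1" "j = 2" | "i = 2" "j = 1" | "i = 1" "j = 3" | "i = 3" "j = 1" | "i = 2" "j = 3" | "i = 3" "j = 2"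
        using ij by auto
      then show "u = v"
      proof cases
        case 1 then show ?thesis using P12[OF uv(1,2)] uv(3,4) by simp
      next
        case 2 then show ?thesis using P12[OF uv(1,2)] uv(3,4) by simp
      next
        case 3 then show ?thesis using P13[OF uv(1,2)] uv(3,4) by simp
      next
        case 4 then show ?thesis using P13[OF uv(1,2)] uv(3,4) by simp
      next
        case 5 then show ?thesis using P23[OF uv(1,2)] uv(3,4) by simp
      next
        case 6 then show ?thesis using P23[OF uv(1,2)] uv(3,4) by simp
      qed
    qed
    then show ?thesis using card_le_Suc0_iff_eq[OF fs] by simp
  qed
  have c2: "\<forall>i\<in>{1,2,3}. \<forall>a\<in>{1..dimn n1 n2 n3 i}. 2 \<le> card (slice W i a)"
    using card2 by blast
  have c1: "\<forall>i\<in>{1,2,3}. \<forall>a\<in>{1..dimn n1 n2 n3 i}. slice W i a \<noteq> {}"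
  proof (intro ballI)
    fix i a assume h: "i \<in> {1,2,3}" "a \<in> {1..dimn n1 n2 n3 i}"
    show "slice W i a \<noteq> {}"
    proof
      assume "slice W i a = {}"
      then show False using card2[OF h] by simp
    qed
  qed
  have c3: "\<forall>i\<in>{1,2,3}. \<forall>j\<in>{1,2,3}. \<forall>a\<in>{1..dimn n1 n2 n3 i}. \<forall>b\<in>{1..dimn n1 n2 n3 j}.
        i \<noteq> j \<longrightarrow> card (slice W i a \<inter> slice W j b) \<le> 1"
    using inter by blast
  show ?thesis unfolding basic_landmark_system_def W_def[symmetric]
    using sub c1 c2 c3 by (intro conjI)
qed

end

lemma modeq: "(a::nat) mod h = b mod h \<Longrightarrow> a < b + h \<Longrightarrow> b < a + h \<Longrightarrow> a = b"
proof -
  assume m: "a mod h = b mod h" and ab: "a < b + h" "b < a + h"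
  show "a = b"
  proof (rule ccontr)
    assume ne: "a \<noteq> b"
    { fix x y :: nat assume xy: "x < y" "x mod h = y mod h" "y < x + h"
      then have "h dvd (y - x)" using mod_eq_dvd_iff_nat[of x y h] by simp
      moreover have "0 < y - x" "y - x < h" using xy by auto
      ultimately have False using dvd_imp_le by fastforce }
    then show False using ne m ab by (metis linorder_neqE_nat)
  qed
qed

lemma pairI: "c \<in> A \<Longrightarrow> c' \<in> A \<Longrightarrow> c \<noteq> c' \<Longrightarrow> P c \<Longrightarrow> P c' \<Longrightarrow> \<exists>c\<in>A. \<exists>c'\<in>A. c \<noteq> c' \<and> P c \<and> P c'"
  by blast

context mc begin

lemma q_le: "n1 * q \<le> n1 * (n2 div 2) \<and> (even n2 \<longrightarrow> q = n2 div 2 \<longrightarrow> r = 0)"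
proof -
  have a: "2 * (n1 * q + r) \<le> n1 * n2" using hi n3eq by simp
  have "n2 \<le> 2 * (n2 div 2) + 1" by simp
  then have "n1 * n2 \<le> n1 * (2 * (n2 div 2) + 1)" by (rule mult_le_mono2)
  moreover have "2 * (n1 * q) \<le> n1 * n2" using a by (meson le_trans mult_le_mono2 le_add1)
  moreover have "n1 * (2 * (n2 div 2) + 1) = 2 * (n1 * (n2 div 2)) + n1" by (simp add: algebra_simps)
  ultimately have "2 * (n1 * q) \<le> 2 * (n1 * (n2 div 2)) + n1" by linarith
  then have b: "n1 * q < n1 * (n2 div 2) + n1" using n1ge by linarith
  have "q < n2 div 2 + 1"
  proof (rule ccontr)
    assume "\<not> ?thesis"
    then have "n2 div 2 + 1 \<le> q" by simp
    then have "n1 * (n2 div 2 + 1) \<le> n1 * q" by (rule mult_le_mono2)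
    then show False using b by (simp add: algebra_simps)
  qed
  then have c: "n1 * q \<le> n1 * (n2 div 2)" by simp
  have "even n2 \<longrightarrow> q = n2 div 2 \<longrightarrow> r = 0"
  proof (intro impI)
    assume "even n2" "q = n2 div 2"
    then have "n1 * n2 = 2 * (n1 * q)" by simp
    then show "r = 0" using a[unfolded distrib_left] by linarith
  qed
  then show ?thesis using c by simp
qed

lemma q_le_f: "q \<le> n2 div 2" using q_le n1ge by simp

lemma ell_le_h: "even n2 \<Longrightarrow> l i \<le> n2 div 2"
proof -
  assume ev: "even n2"
  show ?thesis
  proof (cases "q = n2 div 2")
    case True then show ?thesis using q_le ev ell_r0 by simp
  next
    case False then show ?thesis using q_le_f ell_cases[of i] by auto
  qed
qed

lemma same_blk_close: "c \<in> {1..n3} \<Longrightarrow> c' \<in> {1..n3} \<Longrightarrow> B c = B c' \<Longrightarrow> c < c' + l (B c) \<and> c' < c + l (B c)"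
  using blk_prop[of c] blk_prop[of c'] by auto

lemma even_case: "even n2 \<Longrightarrow> basic_landmark_system n1 n2 n3 (WLeft n1 n3 (yL_even n2) \<union> WRight n1 n3 (yR_even n2))"
proof (rule generic)
  assume ev: "even n2"
  define h where "h = n2 div 2"
  have n2h: "n2 = 2 * h" using ev h_def by simp
  have h2: "2 \<le> h" using n2ge n2h by simp
  have n3h: "3 * h \<le> n3" using lo n2h by simp
  have yL: "yL_even n2 c = (c - 1) mod h + 1" for c by (simp add: yL_even_def h_def)
  have yR: "yR_even n2 c = h + (c - 1) mod h + 1" for c by (simp add: yR_even_def h_def)
  have mlt: "(c - 1) mod h < h" for c using h2 by simp
  show "\<forall>c\<in>{1..n3}. yL_even n2 c \<in> {1..n2} \<and> yR_even n2 c \<in> {1..n2}"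
  proof (intro ballI conjI)
    fix c
    have m: "(c - 1) mod h < h" by (rule mlt)
    show "yL_even n2 c \<in> {1..n2}" unfolding yL using m n2h by auto
    show "yR_even n2 c \<in> {1..n2}" unfolding yR using m n2h by auto
  qed
  show "\<forall>c\<in>{1..n3}. yL_even n2 c \<noteq> yR_even n2 c" unfolding yL yR using mlt h2 by (auto simp del: mod_less_divisor)
  have close: "c \<in> {1..n3} \<Longrightarrow> c' \<in> {1..n3} \<Longrightarrow> B c = B c' \<Longrightarrow> (c - 1) mod h = (c' - 1) mod h \<Longrightarrow> c = c'" for c c'
  proof -
    assume c: "c \<in> {1..n3}" "c' \<in> {1..n3}" "B c = B c'" "(c - 1) mod h = (c' - 1) mod h"
    have "l (B c) \<le> h" using ell_le_h ev h_def by simp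
    then have "c - 1 < c' - 1 + h" "c' - 1 < c - 1 + h" using same_blk_close[OF c(1,2,3)] c by auto
    then have "c - 1 = c' - 1" using modeq c(4) by blast
    then show "c = c'" using c by auto
  qed
  show "\<forall>c\<in>{1..n3}. \<forall>c'\<in>{1..n3}. B c = B c' \<longrightarrow> yL_even n2 c = yL_even n2 c' \<longrightarrow> c = c'"
    using close h2 unfolding yL by auto
  show "\<forall>c\<in>{1..n3}. \<forall>c'\<in>{1..n3}. B c = B c' \<longrightarrow> yR_even n2 c = yR_even n2 c' \<longrightarrow> c = c'"
    using close h2 unfolding yR by auto
  show "\<forall>c\<in>{1..n3}. \<forall>c'\<in>{1..n3}. B c = sig (B c') \<longrightarrow> yL_even n2 c \<noteq> yR_even n2 c'"
  proof (intro ballI impI)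
    fix c c'
    have "yL_even n2 c \<le> h" "h < yR_even n2 c'" unfolding yL yR using mlt[of c] by auto
    then show "yL_even n2 c \<noteq> yR_even n2 c'" by simp
  qed
  show "\<forall>a\<in>{1..n2}. \<exists>c\<in>{1..n3}. \<exists>c'\<in>{1..n3}. c \<noteq> c' \<and> (yL_even n2 c = a \<or> yR_even n2 c = a) \<and> (yL_even n2 c' = a \<or> yR_even n2 c' = a)"
  proof
    fix a assume a: "a \<in> {1..n2}"
    show "\<exists>c\<in>{1..n3}. \<exists>c'\<in>{1..n3}. c \<noteq> c' \<and> (yL_even n2 c = a \<or> yR_even n2 c = a) \<and> (yL_even n2 c' = a \<or> yR_even n2 c' = a)"
    proof (cases "a \<le> h")
      case True
      have e1: "a + h - 1 = (a - 1) + h" using a by simp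
      have e2: "(a - 1) mod h = a - 1" using True a by (intro mod_less) auto
      have "yL_even n2 a = a" "yL_even n2 (a + h) = a" unfolding yL e1 mod_add_self2 e2 using a by auto
      moreover have "a \<in> {1..n3}" "a + h \<in> {1..n3}" using True a n3h by auto
      ultimately show ?thesis using h2 by (intro pairI[of a _ "a + h"]) auto
    next
      case False
      obtain b where b: "a = b + h" "1 \<le> b" "b \<le> h" using False a n2h by (intro that[of "a - h"]) auto
      have e1: "b + h - 1 = (b - 1) + h" using b by simp
      have e2: "(b - 1) mod h = b - 1" using b by (intro mod_less) auto
      have "yR_even n2 b = a" "yR_even n2 (b + h) = a" unfolding yR e1 mod_add_self2 e2 using b by auto
      moreover have "b \<in> {1..n3}" "b + h \<in> {1..n3}" using b n3h by auto
      ultimately show ?thesis using h2 b by (intro pairI[of b _ "b + h"]) auto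
    qed
  qed
qed

end

lemma rank_set_eq: "{c'. 1 \<le> c' \<and> c' \<le> c \<and> c' \<notin> T} = {1..c} - T" by auto

lemma rank_alt: "rank_out T c = card ({1..c} - T)"
  unfolding rank_out_def rank_set_eq ..

lemma rank_diff: "c \<le> c' \<Longrightarrow> rank_out T c' = rank_out T c + card ({c<..c'} - T)"
proof -
  assume cc: "c \<le> c'"
  have "{1..c'} - T = ({1..c} - T) \<union> ({c<..c'} - T)" using cc by auto
  moreover have "({1..c} - T) \<inter> ({c<..c'} - T) = {}" by auto
  ultimately show ?thesis unfolding rank_alt by (simp add: card_Un_disjoint)
qed

lemma rank_pos: "c \<notin> T \<Longrightarrow> 1 \<le> c \<Longrightarrow> 1 \<le> rank_out T c"
proof -
  assume "c \<notin> T" "1 \<le> c"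
  then have "c \<in> {1..c} - T" by simp
  then have "0 < card ({1..c} - T)" by (intro card_gt_0_iff[THEN iffD2]) auto
  then show ?thesis unfolding rank_alt by simp
qed

lemma rank_Suc: "rank_out T (Suc c) = rank_out T c + (if Suc c \<in> T then 0 else 1)"
proof -
  have "{c<..Suc c} = {Suc c}" by auto
  then have "{c<..Suc c} - T = (if Suc c \<in> T then {} else {Suc c})" by auto
  then show ?thesis using rank_diff[of c "Suc c" T] by simp
qed

lemma rank_0: "rank_out T 0 = 0" unfolding rank_alt by simp

lemma rank_ivt: "1 \<le> m \<Longrightarrow> m \<le> rank_out T N \<Longrightarrow> \<exists>c. 1 \<le> c \<and> c \<le> N \<and> c \<notin> T \<and> rank_out T c = m"
proof (induction N)
  case 0 then show ?case by (simp add: rank_0)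
next
  case (Suc N)
  show ?case
  proof (cases "m \<le> rank_out T N")
    case True then show ?thesis using Suc by (meson le_SucI)
  next
    case False
    then have "Suc N \<notin> T" "rank_out T (Suc N) = m" using Suc.prems rank_Suc[of T N] by (auto split: if_splits)
    then show ?thesis by (intro exI[of _ "Suc N"]) simp
  qed
qed

lemma rank_lower: "finite T \<Longrightarrow> N \<le> rank_out T N + card T"
proof -
  assume fT: "finite T"
  have "{1..N} \<subseteq> ({1..N} - T) \<union> T" by auto
  then have "card {1..N} \<le> card (({1..N} - T) \<union> T)" using fT by (intro card_mono) auto
  also have "\<dots> \<le> card ({1..N} - T) + card T" by (rule card_Un_le)
  finally show ?thesis unfolding rank_alt by simp
qed

lemma rank_mono: "c \<le> c' \<Longrightarrow> rank_out T c \<le> rank_out T c'"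
  using rank_diff by simp

context mc begin

definition blockset :: "nat \<Rightarrow> nat set" where "blockset i = {L i<..L i + l i}"

lemma block_rank_neq:
  assumes c: "c \<in> {1..n3}" "c' \<in> {1..n3}" "c < c'" "B c = B c'" "c \<notin> T" "c' \<notin> T"
    and cnt: "card (blockset (B c) - T) \<le> f" and f1: "1 \<le> f"
  shows "(rank_out T c - 1) mod f \<noteq> (rank_out T c' - 1) mod f"
proof
  assume eq: "(rank_out T c - 1) mod f = (rank_out T c' - 1) mod f"
  define K where "K = {c<..c'} - T"
  define Bl where "Bl = blockset (B c) - T"
  have bc: "L (B c) < c" "c \<le> L (B c) + l (B c)" using blk_prop c(1) by auto
  have bc': "L (B c) < c'" "c' \<le> L (B c) + l (B c)" using blk_prop c(2) c(4) by auto
  have KB: "K \<subseteq> Bl - {c}" unfolding K_def Bl_def blockset_def using bc bc' by auto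
  have cB: "c \<in> Bl" unfolding Bl_def blockset_def using bc c by auto
  have fin: "finite Bl" unfolding Bl_def blockset_def by simp
  have "card K \<le> card (Bl - {c})" using KB fin by (intro card_mono) auto
  also have "\<dots> = card Bl - 1" using cB fin by simp
  moreover have "0 < card Bl" using cB fin by (auto simp: card_gt_0_iff)
  moreover have "card Bl \<le> f" using cnt unfolding Bl_def .
  ultimately have k1: "card K < f" by linarith
  have "c' \<in> K" unfolding K_def using c by auto
  then have k0: "0 < card K" unfolding K_def by (auto simp: card_gt_0_iff)
  have rr: "rank_out T c' = rank_out T c + card K" unfolding K_def using rank_diff c(3) by simp
  have rp: "1 \<le> rank_out T c" using rank_pos c by simp
  have "rank_out T c - 1 = rank_out T c' - 1" 
    using modeq[OF eq] rr rp k1 by linarith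
  then show False using rr rp k0 by linarith
qed

lemma block_count:
  assumes i: "i \<in> {1..n1}" and h: "l i \<le> f \<or> (l i \<le> f + 1 \<and> (\<exists>d\<in>T. d \<in> blockset i))"
  shows "card (blockset i - T) \<le> f"
proof (cases "l i \<le> f")
  case True
  have "card (blockset i - T) \<le> card (blockset i)" by (intro card_mono) (auto simp: blockset_def)
  also have "\<dots> = l i" by (simp add: blockset_def)
  finally show ?thesis using True by simp
next
  case False
  then obtain d where d: "d \<in> T" "d \<in> blockset i" and li: "l i \<le> f + 1" using h by auto
  have "card (blockset i - T) \<le> card (blockset i - {d})" using d by (intro card_mono) (auto simp: blockset_def)
  also have "\<dots> = l i - 1" using d by (simp add: blockset_def)
  finally show ?thesis using li by simp
qed

end

lemma card_le1_eq: "finite M \<Longrightarrow> card M \<le> 1 \<Longrightarrow> x \<in> M \<Longrightarrow> y \<in> M \<Longrightarrow> x = y"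
  using card_le_Suc0_iff_eq by fastforce

lemma mod_shift: "1 \<le> a \<Longrightarrow> a \<le> (f::nat) \<Longrightarrow> (a + t * f - 1) mod f + 1 = a"
proof -
  assume a: "1 \<le> a" "a \<le> f"
  have "a + t * f - 1 = (a - 1) + t * f" using a by simp
  then have "(a + t * f - 1) mod f = (a - 1) mod f" by simp
  also have "\<dots> = a - 1" using a by (intro mod_less) auto
  finally show ?thesis using a by simp
qed

lemma odd_half: "odd (i::nat) \<Longrightarrow> i \<le> 2 * R \<Longrightarrow> i = 2 * (i div 2) + 1 \<and> i div 2 < R" by presburger

lemma even_dbl: "(n::nat) = 2 * R \<Longrightarrow> odd n \<Longrightarrow> False" by simp

context mc begin

abbreviation "f \<equiv> fpar n2"

lemma odd_f: "odd n2 \<Longrightarrow> n2 = 2 * f + 1 \<and> 1 \<le> f \<and> n2 div 2 = f"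
  using n2ge by (auto simp: fpar_def elim!: oddE)

lemma ell_le_f1: "odd n2 \<Longrightarrow> l i \<le> f + 1"
  using odd_f q_le_f ell_cases[of i] by auto

lemma big_prop:
  assumes od: "odd n2" and i: "i \<in> {1..n1}" and big: "f < l i"
  shows "l i = f + 1 \<and> q = f \<and> 1 \<le> r \<and> 2 * r \<le> n1 \<and> odd i \<and> i \<le> 2 * r"
proof -
  have of: "n2 = 2 * f + 1" "n2 div 2 = f" using odd_f od by auto
  have qf: "q \<le> f" using q_le_f of by simp
  have lq: "l i = q + 1" "q = f" using ell_cases[of i] big qf by auto
  have r1: "1 \<le> r" using ell_r0[of i] lq by (cases "r = 0") auto
  have a: "2 * (n1 * q + r) \<le> n1 * n2" using hi n3eq by simp
  have "n1 * n2 = n1 * (2 * f + 1)" using arg_cong[OF of(1), of "\<lambda>x. n1 * x"] .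
  also have "\<dots> = 2 * (n1 * q) + n1" using lq by (simp add: algebra_simps)
  finally have "n1 * n2 = 2 * (n1 * q) + n1" .
  then have r2: "2 * r \<le> n1" using a[unfolded distrib_left] by linarith
  have eA: "l i = (if odd i \<and> i \<le> 2 * r then q + 1 else q)" by (rule ell_A[OF r2])
  have oi: "odd i \<and> i \<le> 2 * r"
  proof (rule ccontr)
    assume "\<not> (odd i \<and> i \<le> 2 * r)"
    then have "l i = q" unfolding eA by (simp only: if_False)
    then show False using lq(1) by simp
  qed
  have lf: "l i = f + 1" using lq by simp
  show ?thesis using lf lq(2) r1 r2 oi by blast
qed

lemma big_one:
  assumes od: "odd n2" and i: "i \<in> {1..n1}" and big: "f < l i"
  shows "f < l 1"
proof -
  have p: "l i = f + 1 \<and> q = f \<and> 1 \<le> r \<and> 2 * r \<le> n1 \<and> odd i \<and> i \<le> 2 * r" using big_prop assms by blast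
  then have "l 1 = q + 1" using ell_A[of 1] by simp
  then show ?thesis using p by simp
qed

lemma big_card: "odd n2 \<Longrightarrow> card (bigblocks n1 n2 n3) \<le> r"
proof -
  assume od: "odd n2"
  have "bigblocks n1 n2 n3 \<subseteq> (\<lambda>j. 2 * j + 1) ` {..<r}"
  proof
    fix i assume "i \<in> bigblocks n1 n2 n3"
    then have "i \<in> {1..n1}" "f < l i" by (auto simp: bigblocks_def)
    then have "odd i" "i \<le> 2 * r" using big_prop od by blast+
    then have "i = 2 * (i div 2) + 1" "i div 2 < r" using odd_half by blast+
    then show "i \<in> (\<lambda>j. 2 * j + 1) ` {..<r}" by blast
  qed
  then have "card (bigblocks n1 n2 n3) \<le> card ((\<lambda>j. 2 * j + 1) ` {..<r})" by (intro card_mono) auto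
  also have "\<dots> \<le> card {..<r}" by (rule card_image_le) simp
  finally show ?thesis by simp
qed

lemma big_nonadj:
  assumes od: "odd n2" and i: "i \<in> bigblocks n1 n2 n3" and j: "j \<in> bigblocks n1 n2 n3"
  shows "sig j \<noteq> i"
proof
  assume e: "sig j = i"
  have i1: "i \<in> {1..n1}" "f < l i" and j1: "j \<in> {1..n1}" "f < l j" using i j by (auto simp: bigblocks_def)
  have pi: "odd i" "2 * r \<le> n1" using big_prop[OF od i1] by auto
  have pj: "odd j" "j \<le> 2 * r" using big_prop[OF od j1] by auto
  show False
  proof (cases "j = n1")
    case True
    have n12: "n1 \<le> 2 * r" using pj True by simp
    have o: "odd n1" using pj True by simp
    have "n1 = 2 * r" using n12 pi(2) by (rule antisym)
    from even_dbl[OF this o] show False .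
  next
    case False
    then have "i = j + 1" using e sig_val[OF j1(1)] by simp
    then show False using pi pj by simp
  qed
qed

lemma rank_inj_block:
  assumes c: "c \<in> {1..n3}" "c' \<in> {1..n3}" "B c = B c'" "c \<notin> T" "c' \<notin> T"
    and eq: "(rank_out T c - 1) mod ff = (rank_out T c' - 1) mod ff"
    and cnt: "card (blockset (B c) - T) \<le> ff" and f1: "1 \<le> ff"
  shows "c = c'"
proof (rule ccontr)
  assume "c \<noteq> c'"
  then consider "c < c'" | "c' < c" by linarith
  then show False
  proof cases
    case 1 then show False using block_rank_neq[OF c(1,2) 1 c(3,4,5) cnt f1] eq by simp
  next
    case 2
    have cnt': "card (blockset (B c') - T) \<le> ff" using cnt c(3) by simp
    from block_rank_neq[OF c(2,1) 2 c(3)[symmetric] c(5,4) cnt' f1] show False using eq by simp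
  qed
qed

lemma blockcount_T:
  assumes od: "odd n2" and T: "\<forall>i\<in>{1..n1}. f < l i \<longrightarrow> (\<exists>d\<in>T. d \<in> blockset i)" and i: "i \<in> {1..n1}"
  shows "card (blockset i - T) \<le> f"
proof (cases "f < l i")
  case True
  then have "\<exists>d\<in>T. d \<in> blockset i" using T i by blast
  then show ?thesis using ell_le_f1[OF od, of i] by (intro block_count[OF i] disjI2 conjI)
next
  case False
  then show ?thesis by (intro block_count[OF i] disjI1) simp
qed

end

context mc begin

lemma odd_generic:
  assumes od: "odd n2"
    and I0s: "I0 \<subseteq> {1..n1}" and I0l: "\<forall>i\<in>I0. 2 \<le> l i"
    and I0big: "\<forall>i\<in>{1..n1}. f < l i \<longrightarrow> i \<in> I0"
    and I0ne: "I0 \<noteq> {}" and I0card: "3 * f + card I0 \<le> n3"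
    and I0adj: "\<forall>i\<in>I0. \<forall>j\<in>I0. sig j \<noteq> i"
    and Seq: "Sset n1 n2 n3 = (\<lambda>i. L i + 1) ` I0"
    and Mfin: "finite M" and Mcard: "card M \<le> 1"
    and Mp: "\<forall>c\<in>M. c \<in> {1..n3} \<and> B c \<notin> I0 \<and> (\<forall>j\<in>I0. B c \<noteq> sig j)"
    and yLd: "yL' = (\<lambda>c. if c \<in> M then n2 else yL_odd n1 n2 n3 c)"
  shows "basic_landmark_system n1 n2 n3 (WLeft n1 n3 yL' \<union> WRight n1 n3 (yR_odd n1 n2 n3))"
proof -
  obtain ff where ffd: "fpar n2 = ff" by blast
  have of: "2 * ff + 1 = n2" "1 \<le> ff" using odd_f[OF od] ffd by auto
  define S where "S = Sset n1 n2 n3"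
  define S1 where "S1 = (\<lambda>s. s + 1) ` S"
  define YR where "YR = yR_odd n1 n2 n3"
  have S1eq: "S1 = (\<lambda>i. L i + 2) ` I0" unfolding S1_def S_def Seq image_image by simp
  have SeqI: "S = (\<lambda>i. L i + 1) ` I0" unfolding S_def Seq ..
  have yLo: "yL_odd n1 n2 n3 c = (if c \<in> S then n2 else (rank_out S c - 1) mod ff + 1)" for c
    by (simp add: yL_odd_def S_def ffd)
  have yRo: "YR c = (if c \<in> S1 then n2 else ff + (rank_out S1 c - 1) mod ff + 1)" for c
    by (simp add: yR_odd_def S1_def S_def YR_def Let_def ffd)
  have finI: "finite I0" using I0s finite_subset by blast
  have sI: "B (L i + 1) = i \<and> L i + 1 \<in> {1..n3} \<and> B (L i + 2) = i \<and> L i + 2 \<in> {1..n3}" if "i \<in> I0" for i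
    using sblk_prop[of i] sblk2_prop[of i] I0s I0l that by auto
  have SB: "c \<in> S \<Longrightarrow> \<exists>i\<in>I0. c = L i + 1 \<and> B c = i" for c unfolding SeqI using sI by auto
  have S1B: "c \<in> S1 \<Longrightarrow> \<exists>i\<in>I0. c = L i + 2 \<and> B c = i" for c unfolding S1eq using sI by auto
  have S_S1: "c \<in> S \<Longrightarrow> c \<in> S1 \<Longrightarrow> False" for c
  proof -
    assume "c \<in> S" "c \<in> S1"
    then obtain i j where "i \<in> I0" "c = L i + 1" "B c = i" "j \<in> I0" "c = L j + 2" "B c = j"
      using SB S1B by metis
    then show False by simp
  qed
  have MS: "c \<in> M \<Longrightarrow> c \<notin> S" for c using Mp SB by blast
  have MS1: "c \<in> M \<Longrightarrow> c \<notin> S1" for c using Mp S1B by blast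
  have mf: "x mod ff < ff" for x using of(2) by simp
  have YLc: "(yL' c = n2 \<and> (c \<in> S \<or> c \<in> M)) \<or> (c \<notin> S \<and> c \<notin> M \<and> yL' c = (rank_out S c - 1) mod ff + 1 \<and> yL' c \<in> {1..ff})" for c
    using mf[of "rank_out S c - 1"] unfolding yLd yLo by auto
  have YRc: "(YR c = n2 \<and> c \<in> S1) \<or> (c \<notin> S1 \<and> YR c = ff + (rank_out S1 c - 1) mod ff + 1 \<and> YR c \<in> {ff+1..2*ff})" for c
    using mf[of "rank_out S1 c - 1"] unfolding yRo by auto
  have n2ff: "ff < n2" "2 * ff < n2" using of by auto
  have cntS: "card (blockset i - S) \<le> ff" if "i \<in> {1..n1}" for i
  proof -
    have "\<forall>i\<in>{1..n1}. f < l i \<longrightarrow> (\<exists>d\<in>S. d \<in> blockset i)"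
    proof (intro ballI impI)
      fix i assume "i \<in> {1..n1}" "f < l i"
      then have "i \<in> I0" using I0big by blast
      then show "\<exists>d\<in>S. d \<in> blockset i" using ell_ge1[of i] unfolding SeqI blockset_def by auto
    qed
    from blockcount_T[OF od this that] show ?thesis unfolding ffd .
  qed
  have cntS1: "card (blockset i - S1) \<le> ff" if "i \<in> {1..n1}" for i
  proof -
    have "\<forall>i\<in>{1..n1}. f < l i \<longrightarrow> (\<exists>d\<in>S1. d \<in> blockset i)"
    proof (intro ballI impI)
      fix i assume "i \<in> {1..n1}" "f < l i"
      then have "i \<in> I0" using I0big by blast
      then show "\<exists>d\<in>S1. d \<in> blockset i" using I0l unfolding S1eq blockset_def by force
    qed
    from blockcount_T[OF od this that] show ?thesis unfolding ffd .
  qed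
  show ?thesis unfolding YR_def[symmetric]
  proof (rule generic)
    show "\<forall>c\<in>{1..n3}. yL' c \<in> {1..n2} \<and> YR c \<in> {1..n2}"
    proof
      fix c
      show "yL' c \<in> {1..n2} \<and> YR c \<in> {1..n2}" using YLc[of c] YRc[of c] n2ff by auto
    qed
    show "\<forall>c\<in>{1..n3}. yL' c \<noteq> YR c"
    proof
      fix c
      show "yL' c \<noteq> YR c" using YLc[of c] YRc[of c] n2ff S_S1[of c] MS1[of c] by auto
    qed
    show "\<forall>c\<in>{1..n3}. \<forall>c'\<in>{1..n3}. B c = B c' \<longrightarrow> yL' c = yL' c' \<longrightarrow> c = c'"
    proof (intro ballI impI)
      fix c c' assume c: "c \<in> {1..n3}" "c' \<in> {1..n3}" and bb: "B c = B c'" and e: "yL' c = yL' c'"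
      show "c = c'"
      proof (cases "yL' c = n2")
        case True
        then have m: "c \<in> S \<or> c \<in> M" "c' \<in> S \<or> c' \<in> M" using YLc[of c] YLc[of c'] e n2ff by auto
        show ?thesis
        proof (cases "c \<in> S")
          case cS: True
          show ?thesis
          proof (cases "c' \<in> S")
            case True
            then show ?thesis using SB[OF cS] SB[OF True] bb by auto
          next
            case False
            then have "c' \<in> M" using m by simp
            then show ?thesis using SB[OF cS] bb Mp by auto
          qed
        next
          case cS: False
          then have cM: "c \<in> M" using m by simp
          show ?thesis
          proof (cases "c' \<in> S")
            case True
            then show ?thesis using SB[OF True] bb Mp cM by auto
          next
            case False
            then have "c' \<in> M" using m by simp
            then show ?thesis using card_le1_eq[OF Mfin Mcard cM] by simp
          qed
        qed
      next
        case False
        then have h: "c \<notin> S" "c' \<notin> S" "(rank_out S c - 1) mod ff = (rank_out S c' - 1) mod ff"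
          using YLc[of c] YLc[of c'] e by auto
        show ?thesis using rank_inj_block[OF c bb h(1,2) h(3) cntS[OF blk_range[OF c(1)]] of(2)] .
      qed
    qed
    show "\<forall>c\<in>{1..n3}. \<forall>c'\<in>{1..n3}. B c = B c' \<longrightarrow> YR c = YR c' \<longrightarrow> c = c'"
    proof (intro ballI impI)
      fix c c' assume c: "c \<in> {1..n3}" "c' \<in> {1..n3}" and bb: "B c = B c'" and e: "YR c = YR c'"
      show "c = c'"
      proof (cases "YR c = n2")
        case True
        then have s: "c \<in> S1" "c' \<in> S1" using YRc[of c] YRc[of c'] e n2ff by auto
        obtain i where i: "c = L i + 2" "B c = i" using S1B[OF s(1)] by blast
        obtain j where j: "c' = L j + 2" "B c' = j" using S1B[OF s(2)] by blast
        show ?thesis using bb i j by simp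
      next
        case False
        then have h: "c \<notin> S1" "c' \<notin> S1" "(rank_out S1 c - 1) mod ff = (rank_out S1 c' - 1) mod ff"
          using YRc[of c] YRc[of c'] e by auto
        show ?thesis using rank_inj_block[OF c bb h(1,2) h(3) cntS1[OF blk_range[OF c(1)]] of(2)] .
      qed
    qed
    show "\<forall>c\<in>{1..n3}. \<forall>c'\<in>{1..n3}. B c = sig (B c') \<longrightarrow> yL' c \<noteq> YR c'"
    proof (intro ballI impI notI)
      fix c c' assume c: "c \<in> {1..n3}" "c' \<in> {1..n3}" and bb: "B c = sig (B c')" and e: "yL' c = YR c'"
      have vals: "yL' c = n2" "c \<in> S \<or> c \<in> M" "c' \<in> S1" using YLc[of c] YRc[of c'] e n2ff by auto
      obtain j where j: "j \<in> I0" "B c' = j" using S1B[OF vals(3)] by blast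
      show False
      proof (cases "c \<in> S")
        case True
        obtain i where i: "i \<in> I0" "B c = i" using SB[OF True] by blast
        then show False using I0adj j bb by auto
      next
        case False
        then have "c \<in> M" using vals by simp
        then show False using Mp j bb by auto
      qed
    qed
    show "\<forall>a\<in>{1..n2}. \<exists>c\<in>{1..n3}. \<exists>c'\<in>{1..n3}. c \<noteq> c' \<and> (yL' c = a \<or> YR c = a) \<and> (yL' c' = a \<or> YR c' = a)"
    proof
      fix a assume a: "a \<in> {1..n2}"
      have ff3: "3 * ff + card I0 \<le> n3" using I0card ffd by simp
      have finS: "finite S" "finite S1" unfolding SeqI S1eq using finI by auto
      have cS: "card S \<le> card I0" "card S1 \<le> card I0" unfolding SeqI S1eq using finI by (auto intro: card_image_le)
      have rS: "3 * ff \<le> rank_out S n3" using rank_lower[OF finS(1), of n3] cS ff3 by linarith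
      have rS1: "3 * ff \<le> rank_out S1 n3" using rank_lower[OF finS(2), of n3] cS ff3 by linarith
      have getS: "\<exists>p. 1 \<le> p \<and> p \<le> n3 \<and> p \<notin> S \<and> rank_out S p = m" if "1 \<le> m" "m \<le> 3 * ff" for m
        using rank_ivt[of m S n3] that rS by simp
      have getS1: "\<exists>p. 1 \<le> p \<and> p \<le> n3 \<and> p \<notin> S1 \<and> rank_out S1 p = m" if "1 \<le> m" "m \<le> 3 * ff" for m
        using rank_ivt[of m S1 n3] that rS1 by simp
      consider (top) "a = n2" | (lo) "a \<le> ff" | (mid) "ff < a" "a < n2" using a by (cases "a = n2"; cases "a \<le> ff") auto
      then show "\<exists>c\<in>{1..n3}. \<exists>c'\<in>{1..n3}. c \<noteq> c' \<and> (yL' c = a \<or> YR c = a) \<and> (yL' c' = a \<or> YR c' = a)"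
      proof cases
        case top
        obtain i where i: "i \<in> I0" using I0ne by blast
        have "L i + 1 \<in> S" unfolding SeqI using i by blast
        then have y1: "yL' (L i + 1) = n2" unfolding yLd yLo by simp
        have "L i + 2 \<in> S1" unfolding S1eq using i by blast
        then have y2: "YR (L i + 2) = n2" unfolding yRo by simp
        show ?thesis using sI[OF i] y1 y2 top by (intro pairI[of "L i + 1" _ "L i + 2"]) auto
      next
        case lo
        have a1: "1 \<le> a" using a by simp
        obtain p0 where p0: "1 \<le> p0" "p0 \<le> n3" "p0 \<notin> S" "rank_out S p0 = a + 0 * ff" using getS[of "a + 0 * ff"] lo a1 by auto
        obtain p1 where p1: "1 \<le> p1" "p1 \<le> n3" "p1 \<notin> S" "rank_out S p1 = a + 1 * ff" using getS[of "a + 1 * ff"] lo a1 by auto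
        obtain p2 where p2: "1 \<le> p2" "p2 \<le> n3" "p2 \<notin> S" "rank_out S p2 = a + 2 * ff" using getS[of "a + 2 * ff"] lo a1 by auto
        have v: "p \<notin> M \<Longrightarrow> p \<notin> S \<Longrightarrow> rank_out S p = a + t * ff \<Longrightarrow> yL' p = a" for p t
          unfolding yLd yLo using mod_shift[OF a1 lo, of t] by simp
        have d: "p0 \<noteq> p1" "p0 \<noteq> p2" "p1 \<noteq> p2" using p0(4) p1(4) p2(4) of(2) by auto
        have M2: "x \<in> M \<Longrightarrow> y \<in> M \<Longrightarrow> x = y" for x y using card_le1_eq[OF Mfin Mcard] by blast
        show ?thesis
        proof (cases "p0 \<in> M")
          case True
          then have "p1 \<notin> M" "p2 \<notin> M" using M2 d by blast+
          then show ?thesis using v[of p1 1] v[of p2 2] p1 p2 d by (intro pairI[of p1 _ p2]) auto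
        next
          case False
          show ?thesis
          proof (cases "p1 \<in> M")
            case True
            then have "p2 \<notin> M" using M2 d by blast
            then show ?thesis using v[of p0 0] v[of p2 2] p0 p2 d False by (intro pairI[of p0 _ p2]) auto
          next
            case F2: False
            then show ?thesis using v[of p0 0] v[of p1 1] p0 p1 d False by (intro pairI[of p0 _ p1]) auto
          qed
        qed
      next
        case mid
        define b where "b = a - ff"
        have b: "1 \<le> b" "b \<le> ff" "a = ff + b" using mid of unfolding b_def by auto
        obtain p0 where p0: "1 \<le> p0" "p0 \<le> n3" "p0 \<notin> S1" "rank_out S1 p0 = b + 0 * ff" using getS1[of "b + 0 * ff"] b by auto
        obtain p1 where p1: "1 \<le> p1" "p1 \<le> n3" "p1 \<notin> S1" "rank_out S1 p1 = b + 1 * ff" using getS1[of "b + 1 * ff"] b by auto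
        have v: "p \<notin> S1 \<Longrightarrow> rank_out S1 p = b + t * ff \<Longrightarrow> YR p = a" for p t
          unfolding yRo using mod_shift[OF b(1,2), of t] b(3) by simp
        have d: "p0 \<noteq> p1" using p0(4) p1(4) of(2) by auto
        show ?thesis using v[of p0 0] v[of p1 1] p0 p1 d by (intro pairI[of p0 _ p1]) auto
      qed
    qed
  qed
qed

end

context mc begin

lemma odd_big_case:
  assumes od: "odd n2" and k: "2 \<le> kpar n1 n2 n3"
  shows "basic_landmark_system n1 n2 n3 (WLeft n1 n3 (yL_odd n1 n2 n3) \<union> WRight n1 n3 (yR_odd n1 n2 n3))"
proof -
  define I0 where "I0 = bigblocks n1 n2 n3"
  have I0s: "I0 \<subseteq> {1..n1}" unfolding I0_def bigblocks_def by auto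
  have finI: "finite I0" using I0s finite_subset by blast
  have I0ne: "I0 \<noteq> {}" using k unfolding kpar_def I0_def[symmetric] by auto
  obtain i0 where i0: "i0 \<in> I0" using I0ne by blast
  have bp: "l i = f + 1 \<and> q = f \<and> 1 \<le> r \<and> 2 * r \<le> n1 \<and> odd i \<and> i \<le> 2 * r" if "i \<in> I0" for i
    using big_prop[OF od] that unfolding I0_def bigblocks_def by blast
  have f1: "1 \<le> f" using odd_f[OF od] by simp
  have I0l: "\<forall>i\<in>I0. 2 \<le> l i" using bp f1 by auto
  have I0big: "\<forall>i\<in>{1..n1}. f < l i \<longrightarrow> i \<in> I0" unfolding I0_def bigblocks_def by auto
  have qf: "q = f" using bp[OF i0] by simp
  have "card I0 \<le> r" unfolding I0_def using big_card[OF od] .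
  moreover have "3 * q \<le> n1 * q" using n1ge by (intro mult_le_mono1)
  moreover have "n3 = n1 * q + r" by (rule n3eq)
  ultimately have I0card: "3 * f + card I0 \<le> n3" using qf by linarith
  have I0adj: "\<forall>i\<in>I0. \<forall>j\<in>I0. sig j \<noteq> i" using big_nonadj[OF od] unfolding I0_def by blast
  have Seq: "Sset n1 n2 n3 = (\<lambda>i. L i + 1) ` I0" using k unfolding Sset_def I0_def by (simp add: sblk_def)
  have yLd: "yL_odd n1 n2 n3 = (\<lambda>c. if c \<in> {} then n2 else yL_odd n1 n2 n3 c)" by simp
  show ?thesis by (rule odd_generic[OF od I0s I0l I0big I0ne I0card I0adj Seq _ _ _ yLd]) auto
qed

lemma odd_small_case:
  assumes od: "odd n2" and k: "\<not> 2 \<le> kpar n1 n2 n3"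
    and c: "c \<in> {1..n3}" "B c \<notin> {1, 2, n1}"
  shows "basic_landmark_system n1 n2 n3 (WLeft n1 n3 ((yL_odd n1 n2 n3)(c := n2)) \<union> WRight n1 n3 (yR_odd n1 n2 n3))"
proof -
  have I0s: "{1} \<subseteq> {1..n1}" using n1ge by simp
  have I0l: "\<forall>i\<in>{1}. 2 \<le> l i" using ell_1 by simp
  have finB: "finite (bigblocks n1 n2 n3)" unfolding bigblocks_def by simp
  have cardB: "card (bigblocks n1 n2 n3) \<le> 1" using k unfolding kpar_def by simp
  have I0big: "\<forall>i\<in>{1..n1}. f < l i \<longrightarrow> i \<in> {1}"
  proof (intro ballI impI)
    fix i assume i: "i \<in> {1..n1}" "f < l i"
    have "f < l 1" using big_one[OF od i] .
    then have "1 \<in> bigblocks n1 n2 n3" using n1ge unfolding bigblocks_def by simp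
    moreover have "i \<in> bigblocks n1 n2 n3" using i unfolding bigblocks_def by simp
    ultimately show "i \<in> {1}" using card_le1_eq[OF finB cardB] by blast
  qed
  have of: "2 * f + 1 = n2" using odd_f[OF od] by simp
  have "3 * n2 \<le> 2 * n3" using lo by simp
  then have I0card: "3 * f + card {1::nat} \<le> n3" using of by simp
  have I0adj: "\<forall>i\<in>{1}. \<forall>j\<in>{1}. sig j \<noteq> i" using sig_neq[of 1] n1ge by simp
  have Seq: "Sset n1 n2 n3 = (\<lambda>i. L i + 1) ` {1}" using k unfolding Sset_def by (simp add: L0)
  have s1: "sig 1 = 2" using sig_val[of 1] n1ge by simp
  have Mp: "\<forall>c'\<in>{c}. c' \<in> {1..n3} \<and> B c' \<notin> {1} \<and> (\<forall>j\<in>{1}. B c' \<noteq> sig j)" using c s1 by simp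
  have yLd: "(yL_odd n1 n2 n3)(c := n2) = (\<lambda>x. if x \<in> {c} then n2 else yL_odd n1 n2 n3 x)" by auto
  show ?thesis by (rule odd_generic[OF od I0s I0l I0big _ I0card I0adj Seq _ _ Mp yLd]) auto
qed

end

theorem mainTheorem7:
  fixes n1 n2 n3 :: nat and W :: "vert set"
  assumes "3 \<le> n1" and "3 \<le> n2" and "n1 \<le> n3" and "n2 \<le> n3"
    and "3 * max n1 n2 \<le> 2 * n3" and "2 * n3 \<le> n1 * n2"
    and "middle_cone n1 n2 n3 W"
  shows "basic_landmark_system n1 n2 n3 W"
proof -
  interpret mc n1 n2 n3 using assms(1-6) by unfold_locales
  show ?thesis
  proof (cases "even n2")
    case True
    then show ?thesis using assms(7) even_case unfolding middle_cone_def by simp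
  next
    case od: False
    show ?thesis
    proof (cases "2 \<le> kpar n1 n2 n3")
      case True
      then show ?thesis using assms(7) odd_big_case[OF od True] od unfolding middle_cone_def by simp
    next
      case False
      then obtain c where c: "c \<in> {1..n3}" "blk n1 n3 c \<notin> {1, 2, n1}"
        "W = WLeft n1 n3 ((yL_odd n1 n2 n3)(c := n2)) \<union> WRight n1 n3 (yR_odd n1 n2 n3)"
        using assms(7) od unfolding middle_cone_def by auto
      show ?thesis using odd_small_case[OF od False c(1,2)] c(3) by simp
    qed
  qed
qed

end
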